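(* Let $X$ be a metrizable space which is locally compact and $\sigma$-compact, let $G$ be a group and $\varphi\colon G\times X\to X$ an action (continuity is not required). The following are equivalent: (1) $\varphi$ is metric-independent expansive (MIE); (2) $\varphi$ is expansively extendible at a point; (3) $\varphi$ is cocompactly expansive.
   Context: Write $g\cdot x=\varphi(g,x)$. For a metric $d$ on $X$, the action is expansive with respect to $d$ if there is $c>0$ such that for all $x\neq y$ there is $g\in G$ with $d(g\cdot x,g\cdot y)>c$; it is MIE if it is expansive with respect to every metric compatible with the topology. For a family $\mathcal U$ of subsets and a set $A$, $A\prec\mathcal U$ means $A\subseteq U$ for some $U\in\mathcal U$. An action of $G$ on a space $Z$ is expansive by coverings if there is a finite open cover $\mathcal U$ of $Z$ such that $\{g\cdot x,g\cdot y\}\prec\mathcal U$ for all $g\in G$ implies $x=y$. The action $\varphi$ is expansively extendible at a point if, with $X'=X\cup\{p\}$ the one-point (Alexandroff) compactification of $X$, the action $\varphi'$ of $G$ on $X'$ defined by $\varphi'|_{G\times X}=\varphi$ and $g\cdot p=p$ for all $g\in G$ is expansive by coverings. The action is cocompactly expansive if there exist a finite open cover $\mathcal U$ of $X$ and a compact $K\subseteq X$ such that (i) $G\cdot K=X$ and (ii) whenever $\{g\cdot x,g\cdot y\}\prec\mathcal U\cup\{X\setminus K\}$ for every $g\in G$, then $x=y$. *)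

theory Defs
  imports "HOL-Analysis.Analysis" "HOL-Algebra.Group"
begin

definition group_act :: "('g, 'b) monoid_scheme \<Rightarrow> 'a topology \<Rightarrow> ('g \<Rightarrow> 'a \<Rightarrow> 'a) \<Rightarrow> bool" where
  "group_act G X \<phi> \<longleftrightarrow> group G \<and>
     (\<forall>g\<in>carrier G. \<forall>x\<in>topspace X. \<phi> g x \<in> topspace X) \<and>
     (\<forall>x\<in>topspace X. \<phi> \<one>\<^bsub>G\<^esub> x = x) \<and>
     (\<forall>g\<in>carrier G. \<forall>h\<in>carrier G. \<forall>x\<in>topspace X. \<phi> (g \<otimes>\<^bsub>G\<^esub> h) x = \<phi> g (\<phi> h x))"

definition sigma_compact_space :: "'a topology \<Rightarrow> bool" where
  "sigma_compact_space X \<longleftrightarrow> (\<exists>K :: nat \<Rightarrow> 'a set. (\<forall>n. compactin X (K n)) \<and> (\<Union>n. K n) = topspace X)"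

definition compatible_metric :: "'a topology \<Rightarrow> ('a \<Rightarrow> 'a \<Rightarrow> real) \<Rightarrow> bool" where
  "compatible_metric X d \<longleftrightarrow> Metric_space (topspace X) d \<and> Metric_space.mtopology (topspace X) d = X"

definition expansive_wrt :: "('g, 'b) monoid_scheme \<Rightarrow> 'a topology \<Rightarrow> ('g \<Rightarrow> 'a \<Rightarrow> 'a) \<Rightarrow> ('a \<Rightarrow> 'a \<Rightarrow> real) \<Rightarrow> bool" where
  "expansive_wrt G X \<phi> d \<longleftrightarrow> (\<exists>c>0. \<forall>x\<in>topspace X. \<forall>y\<in>topspace X. x \<noteq> y \<longrightarrow>
      (\<exists>g\<in>carrier G. d (\<phi> g x) (\<phi> g y) > c))"

definition MIE :: "('g, 'b) monoid_scheme \<Rightarrow> 'a topology \<Rightarrow> ('g \<Rightarrow> 'a \<Rightarrow> 'a) \<Rightarrow> bool" where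
  "MIE G X \<phi> \<longleftrightarrow> (\<forall>d. compatible_metric X d \<longrightarrow> expansive_wrt G X \<phi> d)"

definition refines :: "'a set \<Rightarrow> 'a set set \<Rightarrow> bool" where
  "refines A \<U> \<longleftrightarrow> (\<exists>U\<in>\<U>. A \<subseteq> U)"

definition finite_open_cover :: "'a topology \<Rightarrow> 'a set set \<Rightarrow> bool" where
  "finite_open_cover Z \<U> \<longleftrightarrow> finite \<U> \<and> (\<forall>U\<in>\<U>. openin Z U) \<and> \<Union>\<U> = topspace Z"

definition expansive_by_coverings :: "('g, 'b) monoid_scheme \<Rightarrow> 'a topology \<Rightarrow> ('g \<Rightarrow> 'a \<Rightarrow> 'a) \<Rightarrow> bool" where
  "expansive_by_coverings G Z \<psi> \<longleftrightarrow> (\<exists>\<U>. finite_open_cover Z \<U> \<and>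
     (\<forall>x\<in>topspace Z. \<forall>y\<in>topspace Z.
        (\<forall>g\<in>carrier G. refines {\<psi> g x, \<psi> g y} \<U>) \<longrightarrow> x = y))"

text \<open>One-point (Alexandroff) compactification: the added point p is None, X embeds via Some.\<close>
definition alexandroff :: "'a topology \<Rightarrow> 'a option topology" where
  "alexandroff X = topology (\<lambda>U.
     (None \<notin> U \<and> U \<subseteq> Some ` topspace X \<and> openin X (Some -` U)) \<or>
     (None \<in> U \<and> U \<subseteq> insert None (Some ` topspace X) \<and>
        compactin X (topspace X - Some -` U) \<and> closedin X (topspace X - Some -` U)))"

definition ext_action :: "('g \<Rightarrow> 'a \<Rightarrow> 'a) \<Rightarrow> 'g \<Rightarrow> 'a option \<Rightarrow> 'a option" where
  "ext_action \<phi> g z = (case z of None \<Rightarrow> None | Some x \<Rightarrow> Some (\<phi> g x))"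

definition expansively_extendible :: "('g, 'b) monoid_scheme \<Rightarrow> 'a topology \<Rightarrow> ('g \<Rightarrow> 'a \<Rightarrow> 'a) \<Rightarrow> bool" where
  "expansively_extendible G X \<phi> \<longleftrightarrow> expansive_by_coverings G (alexandroff X) (ext_action \<phi>)"

definition cocompactly_expansive :: "('g, 'b) monoid_scheme \<Rightarrow> 'a topology \<Rightarrow> ('g \<Rightarrow> 'a \<Rightarrow> 'a) \<Rightarrow> bool" where
  "cocompactly_expansive G X \<phi> \<longleftrightarrow> (\<exists>\<U> K. finite_open_cover X \<U> \<and> compactin X K \<and>
     (\<Union>g\<in>carrier G. \<phi> g ` K) = topspace X \<and>
     (\<forall>x\<in>topspace X. \<forall>y\<in>topspace X.
        (\<forall>g\<in>carrier G. refines {\<phi> g x, \<phi> g y} (\<U> \<union> {topspace X - K})) \<longrightarrow> x = y))"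

end

theory Submission
  imports Defs
begin

lemma act_inv:
  assumes "group_act G X \<phi>" "g \<in> carrier G" "k \<in> topspace X"
  shows "\<phi> (inv\<^bsub>G\<^esub> g) (\<phi> g k) = k"
proof -
  have gr: "group G" using assms(1) by (simp add: group_act_def)
  have "\<phi> (inv\<^bsub>G\<^esub> g) (\<phi> g k) = \<phi> (inv\<^bsub>G\<^esub> g \<otimes>\<^bsub>G\<^esub> g) k"
    using assms gr by (simp add: group_act_def group.inv_closed)
  also have "\<dots> = k" using assms gr by (simp add: group_act_def group.l_inv)
  finally show ?thesis .
qed

lemma act_in: "group_act G X \<phi> \<Longrightarrow> g \<in> carrier G \<Longrightarrow> x \<in> topspace X \<Longrightarrow> \<phi> g x \<in> topspace X"
  by (simp add: group_act_def)

lemma act_one: "group_act G X \<phi> \<Longrightarrow> x \<in> topspace X \<Longrightarrow> \<phi> \<one>\<^bsub>G\<^esub> x = x"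
  by (simp add: group_act_def)

lemma act_one_in: "group_act G X \<phi> \<Longrightarrow> \<one>\<^bsub>G\<^esub> \<in> carrier G"
  by (simp add: group_act_def group.is_monoid monoid.one_closed)

lemma act_inv_in: "group_act G X \<phi> \<Longrightarrow> g \<in> carrier G \<Longrightarrow> inv\<^bsub>G\<^esub> g \<in> carrier G"
  by (simp add: group_act_def group.inv_closed)

lemma alex_eq: "alexandroff X = Alexandroff_compactification X"
  unfolding alexandroff_def Alexandroff_compactification_def
proof (rule arg_cong[where f=topology], rule ext)
  fix U :: "'a option set"
  show "((None \<notin> U \<and> U \<subseteq> Some ` topspace X \<and> openin X (Some -` U)) \<or>
     (None \<in> U \<and> U \<subseteq> insert None (Some ` topspace X) \<and>
        compactin X (topspace X - Some -` U) \<and> closedin X (topspace X - Some -` U))) = Alexandroff_open X U"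
  proof
    assume "(None \<notin> U \<and> U \<subseteq> Some ` topspace X \<and> openin X (Some -` U)) \<or>
     (None \<in> U \<and> U \<subseteq> insert None (Some ` topspace X) \<and>
        compactin X (topspace X - Some -` U) \<and> closedin X (topspace X - Some -` U))"
    then show "Alexandroff_open X U"
    proof
      assume a: "None \<notin> U \<and> U \<subseteq> Some ` topspace X \<and> openin X (Some -` U)"
      have "U = Some ` (Some -` U)" using a by (simp add: image_vimage_eq) (use not_None_eq in blast)
      then show ?thesis using a Alexandroff_open.base by metis
    next
      assume a: "None \<in> U \<and> U \<subseteq> insert None (Some ` topspace X) \<and>
        compactin X (topspace X - Some -` U) \<and> closedin X (topspace X - Some -` U)"
      have "U = insert None (Some ` (topspace X - (topspace X - Some -` U)))"
        using a by (auto simp: image_iff)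
      then show ?thesis using a Alexandroff_open.ext by metis
    qed
  next
    assume "Alexandroff_open X U"
    then show "(None \<notin> U \<and> U \<subseteq> Some ` topspace X \<and> openin X (Some -` U)) \<or>
     (None \<in> U \<and> U \<subseteq> insert None (Some ` topspace X) \<and>
        compactin X (topspace X - Some -` U) \<and> closedin X (topspace X - Some -` U))"
    proof cases
      case (base V)
      have "Some -` U = V" using base by auto
      then show ?thesis using base openin_subset[of X V] by auto
    next
      case (ext C)
      have "topspace X - Some -` U = C" using ext compactin_subset_topspace by auto
      then show ?thesis using ext by auto
    qed
  qed
qed

lemma openin_alex:
  "openin (alexandroff X) V \<longleftrightarrow>
        (\<exists>U. openin X U \<and> V = Some ` U) \<or>
        (\<exists>C. compactin X C \<and> closedin X C \<and> V = insert None (Some ` (topspace X - C)))"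
  by (simp add: alex_eq openin_Alexandroff_compactification)

lemma topspace_alex: "topspace (alexandroff X) = insert None (Some ` topspace X)"
  by (simp add: alex_eq)

lemma ee_imp_ce:
  assumes act: "group_act G X \<phi>" and ee: "expansively_extendible G X \<phi>"
  shows "cocompactly_expansive G X \<phi>"
proof -
  obtain \<V> where cov: "finite_open_cover (alexandroff X) \<V>"
    and exp: "\<forall>x\<in>topspace (alexandroff X). \<forall>y\<in>topspace (alexandroff X).
        (\<forall>g\<in>carrier G. refines {ext_action \<phi> g x, ext_action \<phi> g y} \<V>) \<longrightarrow> x = y"
    using ee unfolding expansively_extendible_def expansive_by_coverings_def by blast
  have fin: "finite \<V>" and op: "\<And>U. U \<in> \<V> \<Longrightarrow> openin (alexandroff X) U"
    and un: "\<Union>\<V> = insert None (Some ` topspace X)"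
    using cov by (auto simp: finite_open_cover_def topspace_alex)
  obtain U0 where U0: "U0 \<in> \<V>" "None \<in> U0" using un by blast
  have "openin (alexandroff X) U0" using op U0(1) by blast
  then consider (a) U where "openin X U" "U0 = Some ` U"
    | (b) C where "compactin X C" "closedin X C" "U0 = insert None (Some ` (topspace X - C))"
    unfolding openin_alex by blast
  then obtain C where C: "compactin X C" "closedin X C" "U0 = insert None (Some ` (topspace X - C))"
  proof cases
    case a then show ?thesis using U0(2) by auto
  qed blast
  have vim: "Some -` U0 = topspace X - C" using C(3) by auto
  define K where "K = C"
  define \<U> where "\<U> = (\<lambda>U. Some -` U) ` \<V>"
  have sub: "\<And>U. U \<in> \<V> \<Longrightarrow> Some -` U \<subseteq> topspace X"
    using un by blast
  have "finite_open_cover X \<U>"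
    unfolding finite_open_cover_def
  proof (intro conjI ballI)
    show "finite \<U>" using fin by (simp add: \<U>_def)
  next
    fix V assume "V \<in> \<U>"
    then obtain U where U: "U \<in> \<V>" "V = Some -` U" by (auto simp: \<U>_def)
    have "openin (Alexandroff_compactification X) U" using op[OF U(1)] by (simp add: alex_eq)
    then have "openin X {x \<in> topspace X. Some x \<in> U}"
      using continuous_map_Some[of X] unfolding continuous_map_def by blast
    moreover have "{x \<in> topspace X. Some x \<in> U} = V" using sub[OF U(1)] U(2) by auto
    ultimately show "openin X V" by simp
  next
    show "\<Union>\<U> = topspace X"
    proof
      show "\<Union>\<U> \<subseteq> topspace X" using sub by (auto simp: \<U>_def)
      show "topspace X \<subseteq> \<Union>\<U>"
      proof
        fix x assume "x \<in> topspace X"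
        then have "Some x \<in> \<Union>\<V>" using un by blast
        then show "x \<in> \<Union>\<U>" by (auto simp: \<U>_def)
      qed
    qed
  qed
  moreover have "compactin X K" using C by (simp add: K_def)
  moreover have "(\<Union>g\<in>carrier G. \<phi> g ` K) = topspace X"
  proof
    show "(\<Union>g\<in>carrier G. \<phi> g ` K) \<subseteq> topspace X"
    proof (rule UN_least, rule image_subsetI)
      fix g k assume "g \<in> carrier G" "k \<in> K"
      then show "\<phi> g k \<in> topspace X"
        using act_in[OF act] compactin_subset_topspace[OF C(1)] unfolding K_def by blast
    qed
    show "topspace X \<subseteq> (\<Union>g\<in>carrier G. \<phi> g ` K)"
    proof
      fix x assume x: "x \<in> topspace X"
      show "x \<in> (\<Union>g\<in>carrier G. \<phi> g ` K)"
      proof (rule ccontr)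
        assume nx: "x \<notin> (\<Union>g\<in>carrier G. \<phi> g ` K)"
        have "\<forall>g\<in>carrier G. refines {ext_action \<phi> g (Some x), ext_action \<phi> g None} \<V>"
        proof
          fix g assume g: "g \<in> carrier G"
          have "\<phi> g x \<notin> K"
          proof
            assume "\<phi> g x \<in> K"
            then have "\<phi> (inv\<^bsub>G\<^esub> g) (\<phi> g x) \<in> \<phi> (inv\<^bsub>G\<^esub> g) ` K" by blast
            then have "x \<in> \<phi> (inv\<^bsub>G\<^esub> g) ` K" using act_inv[OF act g x] by simp
            then show False using nx act_inv_in[OF act g] by blast
          qed
          then have "Some (\<phi> g x) \<in> U0" unfolding C(3) K_def using act_in[OF act g x] by blast
          then show "refines {ext_action \<phi> g (Some x), ext_action \<phi> g None} \<V>"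
            using U0 unfolding refines_def ext_action_def by (intro bexI[of _ U0]) auto
        qed
        moreover have "Some x \<in> topspace (alexandroff X)" "None \<in> topspace (alexandroff X)"
          using x by (auto simp: topspace_alex)
        ultimately have "Some x = None" using exp by blast
        then show False by simp
      qed
    qed
  qed
  moreover have "\<forall>x\<in>topspace X. \<forall>y\<in>topspace X.
        (\<forall>g\<in>carrier G. refines {\<phi> g x, \<phi> g y} (\<U> \<union> {topspace X - K})) \<longrightarrow> x = y"
  proof (intro ballI impI)
    fix x y assume x: "x \<in> topspace X" and y: "y \<in> topspace X"
      and h: "\<forall>g\<in>carrier G. refines {\<phi> g x, \<phi> g y} (\<U> \<union> {topspace X - K})"
    have "\<forall>g\<in>carrier G. refines {ext_action \<phi> g (Some x), ext_action \<phi> g (Some y)} \<V>"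
    proof
      fix g assume g: "g \<in> carrier G"
      obtain W where W: "W \<in> \<U> \<union> {topspace X - K}" "{\<phi> g x, \<phi> g y} \<subseteq> W"
        using h g unfolding refines_def by blast
      show "refines {ext_action \<phi> g (Some x), ext_action \<phi> g (Some y)} \<V>"
      proof (cases "W \<in> \<U>")
        case True
        then obtain U where "U \<in> \<V>" "W = Some -` U" by (auto simp: \<U>_def)
        then show ?thesis using W unfolding refines_def ext_action_def by auto
      next
        case False
        then have "W = topspace X - K" using W by auto
        then have "{Some (\<phi> g x), Some (\<phi> g y)} \<subseteq> U0" using W C(3) K_def by auto
        then show ?thesis using U0 unfolding refines_def ext_action_def by auto
      qed
    qed
    moreover have "Some x \<in> topspace (alexandroff X)" "Some y \<in> topspace (alexandroff X)"
      using x y by (auto simp: topspace_alex)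
    ultimately have "Some x = Some y" using exp by blast
    then show "x = y" by simp
  qed
  ultimately show ?thesis unfolding cocompactly_expansive_def by blast
qed

lemma ce_imp_ee:
  assumes act: "group_act G X \<phi>" and haus: "Hausdorff_space X" and ce: "cocompactly_expansive G X \<phi>"
  shows "expansively_extendible G X \<phi>"
proof -
  obtain \<U> K where cov: "finite_open_cover X \<U>" and K: "compactin X K"
    and orb: "(\<Union>g\<in>carrier G. \<phi> g ` K) = topspace X"
    and exp: "\<forall>x\<in>topspace X. \<forall>y\<in>topspace X.
        (\<forall>g\<in>carrier G. refines {\<phi> g x, \<phi> g y} (\<U> \<union> {topspace X - K})) \<longrightarrow> x = y"
    using ce unfolding cocompactly_expansive_def by (elim exE conjE)
  have Kc: "closedin X K" using K haus compactin_imp_closedin by blast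
  define U0 where "U0 = insert None (Some ` (topspace X - K))"
  define \<V> where "\<V> = insert U0 ((\<lambda>U. Some ` U) ` \<U>)"
  have "finite_open_cover (alexandroff X) \<V>"
    unfolding finite_open_cover_def
  proof (intro conjI ballI)
    show "finite \<V>" using cov by (simp add: \<V>_def finite_open_cover_def)
  next
    fix V assume V: "V \<in> \<V>"
    show "openin (alexandroff X) V"
    proof (cases "V = U0")
      case True
      then show ?thesis unfolding openin_alex U0_def
        by (intro disjI2 exI[of _ K]) (simp add: K Kc)
    next
      case False
      then obtain U where U: "U \<in> \<U>" "V = Some ` U" using V by (auto simp: \<V>_def)
      have "openin X U" using cov U(1) by (simp add: finite_open_cover_def)
      then show ?thesis unfolding openin_alex using U(2) by blast
    qed
  next
    have un: "\<Union>\<U> = topspace X" using cov by (simp add: finite_open_cover_def)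
    show "\<Union>\<V> = topspace (alexandroff X)"
    proof
      show "\<Union>\<V> \<subseteq> topspace (alexandroff X)"
        unfolding topspace_alex \<V>_def U0_def using un by blast
      show "topspace (alexandroff X) \<subseteq> \<Union>\<V>"
      proof
        fix z assume z: "z \<in> topspace (alexandroff X)"
        show "z \<in> \<Union>\<V>"
        proof (cases z)
          case None then show ?thesis unfolding \<V>_def U0_def by blast
        next
          case (Some a)
          then have "a \<in> topspace X" using z by (auto simp: topspace_alex)
          then obtain U where "U \<in> \<U>" "a \<in> U" using un by blast
          then show ?thesis using Some unfolding \<V>_def by blast
        qed
      qed
    qed
  qed
  moreover have "\<forall>x\<in>topspace (alexandroff X). \<forall>y\<in>topspace (alexandroff X).
        (\<forall>g\<in>carrier G. refines {ext_action \<phi> g x, ext_action \<phi> g y} \<V>) \<longrightarrow> x = y"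
  proof -
    have noinf: False if x: "x \<in> topspace X" and h: "\<forall>g\<in>carrier G. refines {Some (\<phi> g x), None} \<V>" for x
    proof -
      obtain g k where g: "g \<in> carrier G" "k \<in> K" "x = \<phi> g k" using orb x by blast
      have k: "k \<in> topspace X" using g(2) K compactin_subset_topspace by blast
      have ig: "inv\<^bsub>G\<^esub> g \<in> carrier G" using act_inv_in[OF act g(1)] .
      have e: "\<phi> (inv\<^bsub>G\<^esub> g) x = k" using act_inv[OF act g(1) k] g(3) by simp
      have "refines {Some (\<phi> (inv\<^bsub>G\<^esub> g) x), None} \<V>" using h ig by blast
      then have "refines {Some k, None} \<V>" using e by simp
      then obtain W where W: "W \<in> \<V>" "{Some k, None} \<subseteq> W" unfolding refines_def by blast
      then have "W = U0" unfolding \<V>_def by auto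
      then show False using W(2) g(2) unfolding U0_def by auto
    qed
    show ?thesis
    proof (intro ballI impI)
      fix x y assume x: "x \<in> topspace (alexandroff X)" and y: "y \<in> topspace (alexandroff X)"
        and h: "\<forall>g\<in>carrier G. refines {ext_action \<phi> g x, ext_action \<phi> g y} \<V>"
      show "x = y"
      proof (cases x)
        case None note xN = None
        show ?thesis
        proof (cases y)
          case None then show ?thesis using xN by simp
        next
          case (Some b)
          then have "b \<in> topspace X" using y by (auto simp: topspace_alex)
          moreover have "\<forall>g\<in>carrier G. refines {Some (\<phi> g b), None} \<V>"
          proof
            fix g assume "g \<in> carrier G"
            then have "refines {ext_action \<phi> g x, ext_action \<phi> g y} \<V>" using h by blast
            then show "refines {Some (\<phi> g b), None} \<V>" using xN Some
              by (simp add: ext_action_def insert_commute)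
          qed
          ultimately show ?thesis using noinf by blast
        qed
      next
        case (Some a) note xS = Some
        have a: "a \<in> topspace X" using x xS by (auto simp: topspace_alex)
        show ?thesis
        proof (cases y)
          case None
          have "\<forall>g\<in>carrier G. refines {Some (\<phi> g a), None} \<V>"
            using h xS None by (simp add: ext_action_def)
          then show ?thesis using noinf a by blast
        next
          case (Some b)
          have b: "b \<in> topspace X" using y Some by (auto simp: topspace_alex)
          have "\<forall>g\<in>carrier G. refines {\<phi> g a, \<phi> g b} (\<U> \<union> {topspace X - K})"
          proof
            fix g assume g: "g \<in> carrier G"
            have "refines {ext_action \<phi> g x, ext_action \<phi> g y} \<V>" using h g by blast
            then have "refines {Some (\<phi> g a), Some (\<phi> g b)} \<V>"
              using xS Some by (simp add: ext_action_def)
            then obtain W where W: "W \<in> \<V>" "{Some (\<phi> g a), Some (\<phi> g b)} \<subseteq> W"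
              unfolding refines_def by blast
            show "refines {\<phi> g a, \<phi> g b} (\<U> \<union> {topspace X - K})"
            proof (cases "W = U0")
              case True
              then have "{\<phi> g a, \<phi> g b} \<subseteq> topspace X - K" using W(2) unfolding U0_def by auto
              then show ?thesis unfolding refines_def by blast
            next
              case False
              then obtain U where "U \<in> \<U>" "W = Some ` U" using W(1) unfolding \<V>_def by auto
              then show ?thesis using W(2) unfolding refines_def by auto
            qed
          qed
          then have "a = b" using exp a b by blast
          then show ?thesis using xS Some by simp
        qed
      qed
    qed
  qed
  ultimately show ?thesis unfolding expansively_extendible_def expansive_by_coverings_def by blast
qed

lemma compactin_subcover:
  assumes "compactin X S" "\<forall>U\<in>\<U>. openin X U" "S \<subseteq> \<Union>\<U>"
  shows "\<exists>\<F>. finite \<F> \<and> \<F> \<subseteq> \<U> \<and> S \<subseteq> \<Union>\<F>"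
proof -
  have "\<forall>\<U>. (\<forall>U \<in> \<U>. openin X U) \<and> S \<subseteq> \<Union>\<U> \<longrightarrow> (\<exists>\<F>. finite \<F> \<and> \<F> \<subseteq> \<U> \<and> S \<subseteq> \<Union>\<F>)"
    using assms(1) unfolding compactin_def by (elim conjE)
  then show ?thesis using assms(2,3) by simp
qed

lemma (in Metric_space) lebesgue_number:
  assumes K: "compactin mtopology K" and op: "\<forall>U\<in>\<U>. openin mtopology U" and sub: "K \<subseteq> \<Union>\<U>"
  shows "\<exists>\<delta>>0. \<forall>x\<in>K. \<exists>U\<in>\<U>. mball x \<delta> \<subseteq> U"
proof (cases "K = {}")
  case True then show ?thesis by (intro exI[of _ 1]) auto
next
  case False
  have KM: "K \<subseteq> M" using K compactin_subset_topspace by fastforce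
  have "\<forall>x\<in>K. \<exists>r>0. \<exists>U\<in>\<U>. mball x (2*r) \<subseteq> U"
  proof
    fix x assume x: "x \<in> K"
    then obtain U where U: "U \<in> \<U>" "x \<in> U" using sub by blast
    have "openin mtopology U" using op U(1) by blast
    then obtain r where r: "r > 0" "mball x r \<subseteq> U" using U(2) unfolding openin_mtopology by blast
    show "\<exists>r>0. \<exists>U\<in>\<U>. mball x (2*r) \<subseteq> U"
    proof (intro exI[of _ "r/2"] conjI bexI[of _ U])
      show "r/2 > 0" using r by simp
      show "mball x (2*(r/2)) \<subseteq> U" using r by simp
      show "U \<in> \<U>" by (rule U(1))
    qed
  qed
  from bchoice[OF this] obtain R where R0: "\<forall>x\<in>K. R x > 0 \<and> (\<exists>U\<in>\<U>. mball x (2 * R x) \<subseteq> U)"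
    by blast
  then have R: "\<And>x. x \<in> K \<Longrightarrow> R x > 0" "\<And>x. x \<in> K \<Longrightarrow> \<exists>U\<in>\<U>. mball x (2 * R x) \<subseteq> U"
    by auto
  have "\<forall>V\<in>(\<lambda>x. mball x (R x)) ` K. openin mtopology V" using openin_mball by blast
  moreover have "K \<subseteq> \<Union>((\<lambda>x. mball x (R x)) ` K)"
  proof
    fix x assume x: "x \<in> K"
    have "x \<in> mball x (R x)" using R(1)[OF x] KM x by auto
    then show "x \<in> \<Union>((\<lambda>x. mball x (R x)) ` K)" using x by blast
  qed
  ultimately have "\<exists>\<F>. finite \<F> \<and> \<F> \<subseteq> (\<lambda>x. mball x (R x)) ` K \<and> K \<subseteq> \<Union>\<F>"
    by (rule compactin_subcover[OF K])
  then obtain \<V> where V: "finite \<V>" "\<V> \<subseteq> (\<lambda>x. mball x (R x)) ` K" "K \<subseteq> \<Union>\<V>"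
    by (elim exE conjE)
  then obtain F where F: "F \<subseteq> K" "finite F" "\<V> = (\<lambda>x. mball x (R x)) ` F"
    using finite_subset_image[OF V(1) V(2)] by blast
  have Fne: "F \<noteq> {}"
  proof
    assume "F = {}"
    then have "K \<subseteq> {}" using V(3) F(3) by simp
    then show False using False by simp
  qed
  define \<delta> where "\<delta> = Min (R ` F)"
  have dpos: "\<delta> > 0" unfolding \<delta>_def using F Fne R(1) by (subst Min_gr_iff) auto
  have dle: "\<And>x. x \<in> F \<Longrightarrow> \<delta> \<le> R x" unfolding \<delta>_def using F by simp
  show ?thesis
  proof (intro exI[of _ \<delta>] conjI ballI dpos)
    fix y assume y: "y \<in> K"
    then obtain x where x: "x \<in> F" "y \<in> mball x (R x)" using V F by blast
    obtain U where U: "U \<in> \<U>" "mball x (2 * R x) \<subseteq> U" using R(2) x F by blast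
    have "mball y \<delta> \<subseteq> mball x (2 * R x)"
    proof
      fix z assume z: "z \<in> mball y \<delta>"
      have xM: "x \<in> M" and yM: "y \<in> M" and zM: "z \<in> M" and dxy: "d x y < R x" and dyz: "d y z < \<delta>"
        using x z by auto
      have "d x z \<le> d x y + d y z" using triangle[OF xM yM zM] .
      then show "z \<in> mball x (2 * R x)" using xM zM dxy dyz dle[OF x(1)] by simp
    qed
    then show "\<exists>U\<in>\<U>. mball y \<delta> \<subseteq> U" using U by blast
  qed
qed

lemma ce_imp_MIE:
  assumes act: "group_act G X \<phi>" and ce: "cocompactly_expansive G X \<phi>"
  shows "MIE G X \<phi>"
  unfolding MIE_def
proof (intro allI impI)
  fix d assume cm: "compatible_metric X d"
  interpret Metric_space "topspace X" d using cm by (simp add: compatible_metric_def)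
  have Xeq: "mtopology = X" using cm by (simp add: compatible_metric_def)
  obtain \<U> K where cov: "finite_open_cover X \<U>" and K: "compactin X K"
    and orb: "(\<Union>g\<in>carrier G. \<phi> g ` K) = topspace X"
    and exp: "\<forall>x\<in>topspace X. \<forall>y\<in>topspace X.
        (\<forall>g\<in>carrier G. refines {\<phi> g x, \<phi> g y} (\<U> \<union> {topspace X - K})) \<longrightarrow> x = y"
    using ce unfolding cocompactly_expansive_def by (elim exE conjE)
  have KX: "K \<subseteq> topspace X" using K compactin_subset_topspace by blast
  have "\<exists>\<delta>>0. \<forall>x\<in>K. \<exists>U\<in>\<U>. mball x \<delta> \<subseteq> U"
  proof (rule lebesgue_number)
    show "compactin mtopology K" using K Xeq by simp
    show "\<forall>U\<in>\<U>. openin mtopology U" using cov Xeq by (simp add: finite_open_cover_def)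
    show "K \<subseteq> \<Union>\<U>" using cov KX by (simp add: finite_open_cover_def)
  qed
  then obtain \<delta> where dpos: "\<delta> > 0" and leb: "\<And>x. x \<in> K \<Longrightarrow> \<exists>U\<in>\<U>. mball x \<delta> \<subseteq> U" by blast
  show "expansive_wrt G X \<phi> d"
    unfolding expansive_wrt_def
  proof (intro exI[of _ "\<delta>/2"] conjI ballI impI)
    show "\<delta>/2 > 0" using dpos by simp
  next
    fix x y assume x: "x \<in> topspace X" and y: "y \<in> topspace X" and xy: "x \<noteq> y"
    show "\<exists>g\<in>carrier G. \<delta> / 2 < d (\<phi> g x) (\<phi> g y)"
    proof (rule ccontr)
      assume "\<not> (\<exists>g\<in>carrier G. \<delta> / 2 < d (\<phi> g x) (\<phi> g y))"
      then have small: "\<And>g. g \<in> carrier G \<Longrightarrow> d (\<phi> g x) (\<phi> g y) \<le> \<delta>/2" by force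
      have "\<forall>g\<in>carrier G. refines {\<phi> g x, \<phi> g y} (\<U> \<union> {topspace X - K})"
      proof
        fix g assume g: "g \<in> carrier G"
        have gx: "\<phi> g x \<in> topspace X" and gy: "\<phi> g y \<in> topspace X"
          using act_in[OF act g] x y by auto
        have dd: "d (\<phi> g x) (\<phi> g y) < \<delta>" using small[OF g] dpos by simp
        show "refines {\<phi> g x, \<phi> g y} (\<U> \<union> {topspace X - K})"
        proof (cases "\<phi> g x \<in> K")
          case True
          then obtain U where U: "U \<in> \<U>" "mball (\<phi> g x) \<delta> \<subseteq> U" using leb by blast
          have m1: "\<phi> g x \<in> mball (\<phi> g x) \<delta>" using gx dpos by simp
          have m2: "\<phi> g y \<in> mball (\<phi> g x) \<delta>" using gx gy dd by simp
          have "{\<phi> g x, \<phi> g y} \<subseteq> U" using m1 m2 U(2) by blast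
          moreover have "U \<in> \<U> \<union> {topspace X - K}" using U(1) by simp
          ultimately show ?thesis unfolding refines_def by (rule bexI)
        next
          case False note nx = False
          show ?thesis
          proof (cases "\<phi> g y \<in> K")
            case True
            then obtain U where U: "U \<in> \<U>" "mball (\<phi> g y) \<delta> \<subseteq> U" using leb by blast
            have "d (\<phi> g y) (\<phi> g x) < \<delta>" using dd commute by metis
            then have m1: "\<phi> g x \<in> mball (\<phi> g y) \<delta>" using gx gy by simp
            have m2: "\<phi> g y \<in> mball (\<phi> g y) \<delta>" using gy dpos by simp
            have "{\<phi> g x, \<phi> g y} \<subseteq> U" using m1 m2 U(2) by blast
            moreover have "U \<in> \<U> \<union> {topspace X - K}" using U(1) by simp
            ultimately show ?thesis unfolding refines_def by (rule bexI)
          next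
            case False
            then have "{\<phi> g x, \<phi> g y} \<subseteq> topspace X - K" using nx gx gy by blast
            moreover have "topspace X - K \<in> \<U> \<union> {topspace X - K}" by simp
            ultimately show ?thesis unfolding refines_def by (rule bexI)
          qed
        qed
      qed
      then show False using exp[rule_format, OF x y] xy by blast
    qed
  qed
qed

context Metric_space
begin

lemma radius_exists:
  assumes lc: "locally_compact_space mtopology" and x: "x \<in> M"
  shows "\<exists>r>0. r \<le> 1 \<and> compactin mtopology (mcball x r)"
proof -
  obtain U C where U: "openin mtopology U" "compactin mtopology C" "x \<in> U" "U \<subseteq> C"
    using lc x unfolding locally_compact_space_def by (metis topspace_mtopology)
  obtain r where r: "r > 0" "mball x r \<subseteq> U" using U(1,3) unfolding openin_mtopology by blast
  define s where "s = min 1 (r/2)"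
  have s: "s > 0" "s \<le> 1" "s < r" using r by (auto simp: s_def)
  have "mcball x s \<subseteq> mball x r" using s by auto
  then have "mcball x s \<subseteq> C" using r U(4) by blast
  then have "compactin mtopology (mcball x s)"
    using closed_compactin[OF U(2)] closedin_mcball by blast
  then show ?thesis using s by blast
qed

lemma exists_h:
  fixes Kn :: "nat \<Rightarrow> 'a set"
  assumes lc: "locally_compact_space mtopology"
    and Kc: "\<And>n. compactin mtopology (Kn n)" and Kun: "(\<Union>n. Kn n) = M"
  shows "\<exists>h. (\<forall>x\<in>M. h x > 0) \<and> (\<forall>x. h x \<ge> 0) \<and> (\<forall>x\<in>M. \<forall>y\<in>M. h x \<le> h y + d x y)
           \<and> (\<forall>\<epsilon>>0. compactin mtopology {x\<in>M. \<epsilon> \<le> h x})"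
proof -
  have "\<forall>x\<in>M. \<exists>r>0. r \<le> 1 \<and> compactin mtopology (mcball x r)"
    using radius_exists[OF lc] by blast
  from bchoice[OF this] obtain R where R0: "\<forall>x\<in>M. R x > 0 \<and> R x \<le> 1 \<and> compactin mtopology (mcball x (R x))"
    by blast
  then have Rpos: "\<And>x. x \<in> M \<Longrightarrow> R x > 0" and Rle: "\<And>x. x \<in> M \<Longrightarrow> R x \<le> 1"
    and Rc: "\<And>x. x \<in> M \<Longrightarrow> compactin mtopology (mcball x (R x))" by auto
  have KM: "\<And>n. Kn n \<subseteq> M" using Kun by blast
  have "\<forall>n. \<exists>F. finite F \<and> F \<subseteq> Kn n \<and> Kn n \<subseteq> (\<Union>x\<in>F. mball x (R x))"
  proof
    fix n
    have "\<forall>V\<in>(\<lambda>x. mball x (R x)) ` Kn n. openin mtopology V" using openin_mball by blast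
    moreover have "Kn n \<subseteq> \<Union>((\<lambda>x. mball x (R x)) ` Kn n)"
    proof
      fix x assume x: "x \<in> Kn n"
      have xM: "x \<in> M" using KM x by blast
      have "x \<in> mball x (R x)" using Rpos[OF xM] xM by simp
      then show "x \<in> \<Union>((\<lambda>x. mball x (R x)) ` Kn n)" using x by blast
    qed
    ultimately have "\<exists>\<F>. finite \<F> \<and> \<F> \<subseteq> (\<lambda>x. mball x (R x)) ` Kn n \<and> Kn n \<subseteq> \<Union>\<F>"
      by (rule compactin_subcover[OF Kc])
    then obtain \<V> where V: "finite \<V>" "\<V> \<subseteq> (\<lambda>x. mball x (R x)) ` Kn n" "Kn n \<subseteq> \<Union>\<V>"
      by (elim exE conjE)
    from finite_subset_image[OF V(1) V(2)] obtain F where F: "F \<subseteq> Kn n" "finite F" "\<V> = (\<lambda>x. mball x (R x)) ` F"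
      by (elim exE conjE)
    show "\<exists>F. finite F \<and> F \<subseteq> Kn n \<and> Kn n \<subseteq> (\<Union>x\<in>F. mball x (R x))"
      using F V(3) by (intro exI[of _ F]) simp
  qed
  then obtain F where F: "\<And>n. finite (F n)" "\<And>n. F n \<subseteq> Kn n" "\<And>n. Kn n \<subseteq> (\<Union>x\<in>F n. mball x (R x))"
    by metis
  have FM: "\<And>n x. x \<in> F n \<Longrightarrow> x \<in> M" using F(2) KM by blast
  define I where "I = {(n, x). x \<in> F n}"
  define t where "t = (\<lambda>(n::nat, x) y. (1/2::real)^n * max 0 (R x - d x y))"
  define S where "S = (\<lambda>y. insert 0 ((\<lambda>p. t p y) ` I))"
  define h where "h = (\<lambda>y. Sup (S y))"
  have tle: "t (n, x) y \<le> (1/2)^n" if "x \<in> F n" for n x y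
  proof -
    have dn: "0 \<le> d x y" by simp
    have "R x - d x y \<le> 1" using Rle[OF FM[OF that]] dn by linarith
    then have "max 0 (R x - d x y) \<le> 1" by simp
    then show ?thesis unfolding t_def by (simp add: mult_left_le)
  qed
  have tge: "t p y \<ge> 0" for p y unfolding t_def by (auto split: prod.splits)
  have Sne: "S y \<noteq> {}" for y by (simp add: S_def)
  have Sbdd: "bdd_above (S y)" for y
  proof (rule bdd_aboveI[of _ 1])
    fix z assume "z \<in> S y"
    then consider "z = 0" | n x where "x \<in> F n" "z = t (n, x) y"
      unfolding S_def I_def by auto
    then show "z \<le> 1"
    proof cases
      case 2
      have "(1/2::real)^n \<le> 1" by (simp add: power_le_one)
      then show ?thesis using tle[OF 2(1), of y] 2(2) by linarith
    qed simp
  qed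
  have tin: "t (n, x) y \<in> S y" if "x \<in> F n" for n x y
    using that unfolding S_def I_def by auto
  have hge: "t (n, x) y \<le> h y" if "x \<in> F n" for n x y
    unfolding h_def using cSup_upper[OF tin[OF that] Sbdd] .
  have h0: "h y \<ge> 0" for y
    unfolding h_def using cSup_upper[of 0 "S y", OF _ Sbdd] by (simp add: S_def)
  have hpos: "h y > 0" if y: "y \<in> M" for y
  proof -
    obtain n where "y \<in> Kn n" using Kun y by blast
    then obtain x where x: "x \<in> F n" "y \<in> mball x (R x)" using F(3) by blast
    have "t (n, x) y > 0" using x unfolding t_def by simp
    then show ?thesis using hge[OF x(1), of y] by linarith
  qed
  have hlip: "h y \<le> h z + d y z" if y: "y \<in> M" and z: "z \<in> M" for y z
  proof -
  have "Sup (S y) \<le> h z + d y z"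
  proof (rule cSup_least[OF Sne])
    fix w assume "w \<in> S y"
    then consider "w = 0" | n x where "x \<in> F n" "w = t (n, x) y"
      unfolding S_def I_def by auto
    then show "w \<le> h z + d y z"
    proof cases
      case 1 then show ?thesis using h0[of z] nonneg[of y z] by linarith
    next
      case 2
      have xM: "x \<in> M" using FM[OF 2(1)] .
      have tri: "d x z \<le> d x y + d y z" using triangle[OF xM y z] .
      then have e0: "R x - d x y \<le> (R x - d x z) + d y z" using tri by linarith
      have m: "R x - d x z \<le> max 0 (R x - d x z)" "0 \<le> max 0 (R x - d x z)" by simp_all
      have dyz: "0 \<le> d y z" by simp
      have e1: "R x - d x y \<le> max 0 (R x - d x z) + d y z" using e0 m by linarith
      have e2: "0 \<le> max 0 (R x - d x z) + d y z" using m dyz by linarith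
      have "max 0 (R x - d x y) \<le> max 0 (R x - d x z) + d y z" using e1 e2 by simp
      then have "(1/2::real)^n * max 0 (R x - d x y) \<le> (1/2)^n * max 0 (R x - d x z) + (1/2)^n * d y z"
        by (simp add: distrib_left[symmetric] mult_left_mono)
      moreover have "(1/2::real)^n * d y z \<le> d y z"
        using nonneg[of y z] by (simp add: mult_left_le_one_le power_le_one)
      ultimately have "t (n, x) y \<le> t (n, x) z + d y z" unfolding t_def by simp
      then show ?thesis using hge[OF 2(1), of z] 2(2) by linarith
    qed
  qed
  then show ?thesis by (simp add: h_def)
  qed
  have hcomp: "compactin mtopology {x\<in>M. \<epsilon> \<le> h x}" if eps: "\<epsilon> > 0" for \<epsilon>
  proof -
    obtain N where N: "(1/2::real)^N < \<epsilon>" using real_arch_pow_inv[OF eps, of "1/2"] by auto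
    define C where "C = (\<Union>n<N. \<Union>x\<in>F n. mcball x (R x))"
    have Cc: "compactin mtopology C"
      unfolding C_def
    proof (rule compactin_Union)
      show "finite ((\<lambda>n. \<Union>x\<in>F n. mcball x (R x)) ` {..<N})" by simp
    next
      fix S assume "S \<in> (\<lambda>n. \<Union>x\<in>F n. mcball x (R x)) ` {..<N}"
      then obtain n where S: "S = (\<Union>x\<in>F n. mcball x (R x))" by blast
      show "compactin mtopology S" unfolding S
      proof (rule compactin_Union)
        show "finite ((\<lambda>x. mcball x (R x)) ` F n)" using F(1) by simp
      next
        fix T assume "T \<in> (\<lambda>x. mcball x (R x)) ` F n"
        then obtain x where "x \<in> F n" "T = mcball x (R x)" by blast
        then show "compactin mtopology T" using Rc FM by blast
      qed
    qed
    have sub: "{x\<in>M. \<epsilon> \<le> h x} \<subseteq> C"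
    proof
      fix y assume "y \<in> {x\<in>M. \<epsilon> \<le> h x}"
      then have y: "y \<in> M" "\<epsilon> \<le> h y" by auto
      have "(1/2::real)^N < Sup (S y)" using N y(2) unfolding h_def by linarith
      then obtain w where w: "w \<in> S y" "(1/2::real)^N < w"
        using less_cSup_iff[OF Sne Sbdd] by blast
      have "w \<noteq> 0" using w(2) by (metis zero_less_power zero_less_divide_1_iff zero_less_numeral order.asym)
      then obtain n x where nx: "x \<in> F n" "w = t (n, x) y" using w(1) unfolding S_def I_def by auto
      have "(1/2::real)^N < (1/2)^n" using w(2) nx tle[OF nx(1), of y] by linarith
      then have "n < N" by (simp add: power_strict_decreasing_iff)
      moreover have "0 < max 0 (R x - d x y)"
      proof (rule ccontr)
        assume "\<not> 0 < max 0 (R x - d x y)"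
        then have "t (n, x) y = 0" unfolding t_def by simp
        then show False using w(2) nx(2) by (metis zero_less_power zero_less_divide_1_iff zero_less_numeral order.asym)
      qed
      then have "y \<in> mcball x (R x)" using y(1) FM[OF nx(1)] by simp
      ultimately show "y \<in> C" unfolding C_def using nx(1) by blast
    qed
    have "closedin mtopology {x\<in>M. \<epsilon> \<le> h x}"
      unfolding closedin_def
    proof
      show "{x \<in> M. \<epsilon> \<le> h x} \<subseteq> topspace mtopology" by auto
      have "topspace mtopology - {x \<in> M. \<epsilon> \<le> h x} = {x\<in>M. h x < \<epsilon>}" by auto
      moreover have "openin mtopology {x\<in>M. h x < \<epsilon>}"
        unfolding openin_mtopology
      proof (intro conjI allI impI)
        show "{x \<in> M. h x < \<epsilon>} \<subseteq> M" by auto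
        fix y assume "y \<in> {x \<in> M. h x < \<epsilon>}"
        then have y: "y \<in> M" "h y < \<epsilon>" by auto
        show "\<exists>r>0. mball y r \<subseteq> {x \<in> M. h x < \<epsilon>}"
        proof (intro exI[of _ "\<epsilon> - h y"] conjI subsetI)
          show "\<epsilon> - h y > 0" using y by simp
          fix z assume "z \<in> mball y (\<epsilon> - h y)"
          then have z: "z \<in> M" "d y z < \<epsilon> - h y" by auto
          have "h z \<le> h y + d z y" using hlip[OF z(1) y(1)] .
          moreover have "d z y = d y z" by (rule commute)
          ultimately show "z \<in> {x \<in> M. h x < \<epsilon>}" using z by simp
        qed
      qed
      ultimately show "openin mtopology (topspace mtopology - {x \<in> M. \<epsilon> \<le> h x})" by simp
    qed
    then show ?thesis using closed_compactin[OF Cc sub] by blast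
  qed
  show ?thesis
    by (intro exI[of _ h] conjI ballI allI impI hpos h0 hlip hcomp)
qed

end

lemma tri_aux:
  fixes a b c hx hy hz :: real
  assumes "a \<le> b + c" "hx \<le> hy + b" "hz \<le> hy + c" "0 \<le> hx" "0 \<le> hy" "0 \<le> hz" "0 \<le> b" "0 \<le> c"
  shows "min a (hx + hz) \<le> min b (hx + hy) + min c (hy + hz)"
  using assms unfolding min_def by auto

lemma min_zero_aux:
  fixes a b :: real
  assumes "0 \<le> a" "0 < b"
  shows "min a b = 0 \<longleftrightarrow> a = 0"
  using assms unfolding min_def by auto

lemma MIE_imp_ce:
  fixes G :: "('g, 'b) monoid_scheme" and X :: "'a topology" and \<phi> :: "'g \<Rightarrow> 'a \<Rightarrow> 'a"
  assumes act: "group_act G X \<phi>" and mz: "metrizable_space X" and lc: "locally_compact_space X"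
    and sc: "sigma_compact_space X" and mie: "MIE G X \<phi>"
  shows "cocompactly_expansive G X \<phi>"
proof -
  obtain M d0 where md: "Metric_space M d0" and Xeq: "X = Metric_space.mtopology M d0"
    using mz unfolding metrizable_space_def by (elim exE conjE)
  interpret M0: Metric_space M d0 by (rule md)
  have TX: "topspace X = M" using Xeq by simp
  obtain Kn :: "nat \<Rightarrow> 'a set" where Kn: "(\<forall>n. compactin X (Kn n)) \<and> (\<Union>n. Kn n) = topspace X"
    using sc unfolding sigma_compact_space_def by (elim exE)
  have "\<exists>h. (\<forall>x\<in>M. h x > 0) \<and> (\<forall>x. h x \<ge> 0) \<and> (\<forall>x\<in>M. \<forall>y\<in>M. h x \<le> h y + d0 x y)
           \<and> (\<forall>\<epsilon>>0. compactin M0.mtopology {x\<in>M. \<epsilon> \<le> h x})"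
  proof (rule M0.exists_h)
    show "locally_compact_space M0.mtopology" using lc Xeq by simp
    show "\<And>n. compactin M0.mtopology (Kn n)" using Kn Xeq by simp
    show "(\<Union>n. Kn n) = M" using Kn TX by simp
  qed
  then obtain h where hpos: "\<forall>x\<in>M. h x > 0" and h0: "\<forall>x. h x \<ge> 0"
    and hlip: "\<forall>x\<in>M. \<forall>y\<in>M. h x \<le> h y + d0 x y"
    and hc: "\<forall>\<epsilon>>0. compactin M0.mtopology {x\<in>M. \<epsilon> \<le> h x}"
    by (elim exE conjE)
  define d where "d = (\<lambda>x y. min (d0 x y) (h x + h y))"
  have dle: "d x y \<le> h x + h y" for x y unfolding d_def by simp
  have dle0: "d x y \<le> d0 x y" for x y unfolding d_def by simp
  have md1: "Metric_space M d"
  proof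
    fix x y
    show "0 \<le> d x y" using h0 unfolding d_def by (simp add: add_nonneg_nonneg)
    show "d x y = d y x" unfolding d_def by (simp add: M0.commute add.commute)
  next
    fix x y assume x: "x \<in> M" and y: "y \<in> M"
    have "0 < h x + h y" using hpos x y by (simp add: add_pos_pos)
    then have "d x y = 0 \<longleftrightarrow> d0 x y = 0" unfolding d_def by (rule min_zero_aux[OF M0.nonneg])
    then show "d x y = 0 \<longleftrightarrow> x = y" using M0.zero[OF x y] by simp
  next
    fix x y z assume x: "x \<in> M" and y: "y \<in> M" and z: "z \<in> M"
    have T: "d0 x z \<le> d0 x y + d0 y z" using M0.triangle[OF x y z] .
    have L1: "h x \<le> h y + d0 x y" using hlip x y by blast
    have L2: "h z \<le> h y + d0 z y" using hlip z y by blast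
    have "d0 z y = d0 y z" by (rule M0.commute)
    then have L2': "h z \<le> h y + d0 y z" using L2 by simp
    show "d x z \<le> d x y + d y z" unfolding d_def
      by (rule tri_aux[OF T L1 L2']) (use h0 in auto)
  qed
  interpret M1: Metric_space M d by (rule md1)
  have ball01: "M0.mball x r \<subseteq> M1.mball x r" for x r
  proof
    fix y assume "y \<in> M0.mball x r"
    then have y: "x \<in> M" "y \<in> M" "d0 x y < r" by auto
    have "d x y < r" using dle0[of x y] y(3) by linarith
    then show "y \<in> M1.mball x r" using y by simp
  qed
  have ball10: "M1.mball x r \<subseteq> M0.mball x r" if x: "x \<in> M" and r: "r \<le> h x" for x r
  proof
    fix y assume "y \<in> M1.mball x r"
    then have y: "y \<in> M" "d x y < r" by auto
    have "h y > 0" using hpos y(1) by blast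
    have "d x y = d0 x y \<or> d x y = h x + h y" unfolding d_def by (simp add: min_def)
    then have "d0 x y < r"
    proof
      assume "d x y = h x + h y"
      then show ?thesis using y(2) r \<open>h y > 0\<close> by linarith
    qed (use y(2) in simp)
    then show "y \<in> M0.mball x r" using x y by simp
  qed
  have Top: "M1.mtopology = X"
    unfolding Xeq topology_eq
  proof
    fix U
    show "openin M1.mtopology U = openin M0.mtopology U"
      unfolding M1.openin_mtopology M0.openin_mtopology
    proof
      assume A: "U \<subseteq> M \<and> (\<forall>x. x \<in> U \<longrightarrow> (\<exists>r>0. M1.mball x r \<subseteq> U))"
      show "U \<subseteq> M \<and> (\<forall>x. x \<in> U \<longrightarrow> (\<exists>r>0. M0.mball x r \<subseteq> U))"
      proof (intro conjI allI impI)
        show "U \<subseteq> M" using A by simp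
        fix x assume xU: "x \<in> U"
        then obtain r where r: "r > 0" "M1.mball x r \<subseteq> U" using A by blast
        have "M0.mball x r \<subseteq> U" using ball01 r(2) by (rule subset_trans)
        then show "\<exists>r>0. M0.mball x r \<subseteq> U" using r(1) by blast
      qed
    next
      assume A: "U \<subseteq> M \<and> (\<forall>x. x \<in> U \<longrightarrow> (\<exists>r>0. M0.mball x r \<subseteq> U))"
      show "U \<subseteq> M \<and> (\<forall>x. x \<in> U \<longrightarrow> (\<exists>r>0. M1.mball x r \<subseteq> U))"
      proof (intro conjI allI impI)
        show "U \<subseteq> M" using A by simp
        fix x assume xU: "x \<in> U"
        then have xM: "x \<in> M" using A by blast
        obtain r where r: "r > 0" "M0.mball x r \<subseteq> U" using A xU by blast
        define s where "s = min r (h x)"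
        have s: "s > 0" "s \<le> h x" "s \<le> r" using r(1) hpos xM by (auto simp: s_def)
        have "M1.mball x s \<subseteq> M0.mball x s" by (rule ball10[OF xM s(2)])
        also have "\<dots> \<subseteq> M0.mball x r" using s(3) by (rule M0.mball_subset_concentric)
        finally have "M1.mball x s \<subseteq> U" using r(2) by (rule subset_trans)
        then show "\<exists>r>0. M1.mball x r \<subseteq> U" using s(1) by blast
      qed
    qed
  qed
  have cm: "compatible_metric X d" using md1 Top TX by (simp add: compatible_metric_def)
  then have "expansive_wrt G X \<phi> d" using mie by (simp add: MIE_def)
  then obtain c where c: "c > 0" and expc: "\<forall>x\<in>M. \<forall>y\<in>M. x \<noteq> y \<longrightarrow> (\<exists>g\<in>carrier G. d (\<phi> g x) (\<phi> g y) > c)"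
    unfolding expansive_wrt_def TX by (elim exE conjE)
  have actM: "\<And>g x. g \<in> carrier G \<Longrightarrow> x \<in> M \<Longrightarrow> \<phi> g x \<in> M" using act_in[OF act] TX by blast
  define S where "S = {y\<in>M. \<forall>g\<in>carrier G. h (\<phi> g y) < c/2}"
  have Suniq: "y = z" if y: "y \<in> S" and z: "z \<in> S" for y z
  proof (rule ccontr)
    assume "y \<noteq> z"
    moreover have yM: "y \<in> M" and zM: "z \<in> M" using y z by (auto simp: S_def)
    ultimately obtain g where g: "g \<in> carrier G" "d (\<phi> g y) (\<phi> g z) > c" using expc by blast
    have "h (\<phi> g y) < c/2" "h (\<phi> g z) < c/2" using y z g(1) by (auto simp: S_def)
    then show False using dle[of "\<phi> g y" "\<phi> g z"] g(2) by linarith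
  qed
  obtain r where r: "r > 0" "r \<le> c/2" "\<And>y. y \<in> S \<Longrightarrow> r \<le> h y"
  proof (cases "S = {}")
    case True
    show ?thesis by (rule that[of "c/2"]) (use c True in auto)
  next
    case False
    then obtain y0 where y0: "y0 \<in> S" by blast
    have "h y0 > 0" using y0 hpos by (auto simp: S_def)
    show ?thesis
    proof (rule that[of "min (c/2) (h y0)"])
      show "min (c/2) (h y0) > 0" using c \<open>h y0 > 0\<close> by simp
      show "min (c/2) (h y0) \<le> c/2" by simp
      fix y assume "y \<in> S"
      then have "y = y0" using Suniq y0 by blast
      then show "min (c/2) (h y0) \<le> h y" by simp
    qed
  qed
  define K where "K = {x\<in>M. r/2 \<le> h x}"
  have "r/2 > 0" using r(1) by simp
  then have Kc: "compactin X K" using hc Xeq unfolding K_def by blast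
  have KM: "K \<subseteq> M" unfolding K_def by blast
  define V where "V = {x\<in>M. h x < r}"
  have Vo: "openin X V"
    unfolding Xeq M0.openin_mtopology
  proof (intro conjI allI impI)
    show "V \<subseteq> M" unfolding V_def by blast
    fix y assume "y \<in> V"
    then have y: "y \<in> M" "h y < r" by (auto simp: V_def)
    show "\<exists>s>0. M0.mball y s \<subseteq> V"
    proof (intro exI[of _ "r - h y"] conjI subsetI)
      show "r - h y > 0" using y by simp
      fix z assume "z \<in> M0.mball y (r - h y)"
      then have z: "z \<in> M" "d0 y z < r - h y" by auto
      have "h z \<le> h y + d0 z y" using hlip z(1) y(1) by blast
      moreover have "d0 z y = d0 y z" by (rule M0.commute)
      ultimately show "z \<in> V" using z unfolding V_def by simp
    qed
  qed
  define \<W> where "\<W> = (\<lambda>k. M1.mball k (c/2)) ` K"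
  have Wo: "\<forall>W\<in>\<W>. openin X W" unfolding \<W>_def using M1.openin_mball Top by blast
  have KW: "K \<subseteq> \<Union>\<W>"
  proof
    fix k assume k: "k \<in> K"
    then have "k \<in> M1.mball k (c/2)" using KM c by auto
    then show "k \<in> \<Union>\<W>" using k unfolding \<W>_def by blast
  qed
  have "\<exists>\<F>. finite \<F> \<and> \<F> \<subseteq> \<W> \<and> K \<subseteq> \<Union>\<F>"
    by (rule compactin_subcover[OF Kc Wo KW])
  then obtain \<F> where F: "finite \<F>" "\<F> \<subseteq> \<W>" "K \<subseteq> \<Union>\<F>" by (elim exE conjE)
  define \<U> where "\<U> = insert V \<F>"
  have cov: "finite_open_cover X \<U>"
    unfolding finite_open_cover_def
  proof (intro conjI ballI)
    show "finite \<U>" using F(1) by (simp add: \<U>_def)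
  next
    fix U assume "U \<in> \<U>"
    then show "openin X U" using Vo Wo F(2) unfolding \<U>_def by blast
  next
    show "\<Union>\<U> = topspace X"
    proof
      have "\<Union>\<W> \<subseteq> M" unfolding \<W>_def by auto
      then show "\<Union>\<U> \<subseteq> topspace X" using F(2) TX unfolding \<U>_def V_def by blast
      show "topspace X \<subseteq> \<Union>\<U>"
      proof
        fix x assume "x \<in> topspace X"
        then have x: "x \<in> M" using TX by simp
        show "x \<in> \<Union>\<U>"
        proof (cases "r/2 \<le> h x")
          case True
          then have "x \<in> K" using x by (simp add: K_def)
          then show ?thesis using F(3) unfolding \<U>_def by blast
        next
          case False
          then have "x \<in> V" using x r(1) by (simp add: V_def)
          then show ?thesis unfolding \<U>_def by blast
        qed
      qed
    qed
  qed
  have orb: "(\<Union>g\<in>carrier G. \<phi> g ` K) = topspace X"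
  proof
    show "(\<Union>g\<in>carrier G. \<phi> g ` K) \<subseteq> topspace X"
    proof (rule UN_least, rule image_subsetI)
      fix g k assume "g \<in> carrier G" "k \<in> K"
      then show "\<phi> g k \<in> topspace X" using actM KM TX by blast
    qed
    show "topspace X \<subseteq> (\<Union>g\<in>carrier G. \<phi> g ` K)"
    proof
      fix x assume "x \<in> topspace X"
      then have x: "x \<in> M" using TX by simp
      show "x \<in> (\<Union>g\<in>carrier G. \<phi> g ` K)"
      proof (cases "\<exists>g\<in>carrier G. r/2 \<le> h (\<phi> g x)")
        case True
        then obtain g where g: "g \<in> carrier G" "r/2 \<le> h (\<phi> g x)" by blast
        have k: "\<phi> g x \<in> K" using g actM x by (simp add: K_def)
        have "\<phi> (inv\<^bsub>G\<^esub> g) (\<phi> g x) = x" using act_inv[OF act g(1)] x TX by simp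
        then have "x \<in> \<phi> (inv\<^bsub>G\<^esub> g) ` K" using k by (metis image_eqI)
        then show ?thesis using act_inv_in[OF act g(1)] by blast
      next
        case False
        then have lt: "\<forall>g\<in>carrier G. h (\<phi> g x) < r/2" by auto
        have "\<forall>g\<in>carrier G. h (\<phi> g x) < c/2"
        proof
          fix g assume "g \<in> carrier G"
          then have "h (\<phi> g x) < r/2" using lt by blast
          then show "h (\<phi> g x) < c/2" using r(1,2) by linarith
        qed
        then have "x \<in> S" using x unfolding S_def by blast
        then have "r \<le> h x" by (rule r(3))
        moreover have "h (\<phi> \<one>\<^bsub>G\<^esub> x) < r/2" using lt act_one_in[OF act] by blast
        moreover have "\<phi> \<one>\<^bsub>G\<^esub> x = x" using act_one[OF act] x TX by simp
        ultimately show ?thesis using r(1) by simp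
      qed
    qed
  qed
  have exp: "\<forall>x\<in>topspace X. \<forall>y\<in>topspace X.
        (\<forall>g\<in>carrier G. refines {\<phi> g x, \<phi> g y} (\<U> \<union> {topspace X - K})) \<longrightarrow> x = y"
  proof (intro ballI impI)
    fix x y assume x0: "x \<in> topspace X" and y0: "y \<in> topspace X"
      and H: "\<forall>g\<in>carrier G. refines {\<phi> g x, \<phi> g y} (\<U> \<union> {topspace X - K})"
    have x: "x \<in> M" and y: "y \<in> M" using x0 y0 TX by auto
    show "x = y"
    proof (rule ccontr)
      assume "x \<noteq> y"
      then obtain g where g: "g \<in> carrier G" "d (\<phi> g x) (\<phi> g y) > c" using expc x y by blast
      have gx: "\<phi> g x \<in> M" and gy: "\<phi> g y \<in> M" using actM g(1) x y by auto
      have "refines {\<phi> g x, \<phi> g y} (\<U> \<union> {topspace X - K})" using H g(1) by blast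
      then obtain W where W: "W \<in> \<U> \<union> {topspace X - K}" "{\<phi> g x, \<phi> g y} \<subseteq> W"
        unfolding refines_def by (elim bexE)
      have "d (\<phi> g x) (\<phi> g y) \<le> c"
      proof (cases "W \<in> \<F>")
        case True
        then obtain k where k: "k \<in> K" "W = M1.mball k (c/2)" using F(2) unfolding \<W>_def by blast
        have kM: "k \<in> M" using k(1) KM by blast
        have a: "d k (\<phi> g x) < c/2" and b: "d k (\<phi> g y) < c/2" using W(2) k(2) by auto
        have "d (\<phi> g x) (\<phi> g y) \<le> d (\<phi> g x) k + d k (\<phi> g y)" by (rule M1.triangle[OF gx kM gy])
        moreover have "d (\<phi> g x) k = d k (\<phi> g x)" by (rule M1.commute)
        ultimately show ?thesis using a b by linarith
      next
        case False
        then have "W = V \<or> W = topspace X - K" using W(1) unfolding \<U>_def by blast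
        then have "h (\<phi> g x) < r \<and> h (\<phi> g y) < r"
        proof
          assume "W = V" then show ?thesis using W(2) unfolding V_def by blast
        next
          assume "W = topspace X - K"
          then have "\<phi> g x \<notin> K" "\<phi> g y \<notin> K" using W(2) by auto
          then show ?thesis using gx gy r(1) unfolding K_def by auto
        qed
        then show ?thesis using dle[of "\<phi> g x" "\<phi> g y"] r(2) by linarith
      qed
      then show False using g(2) by linarith
    qed
  qed
  show ?thesis unfolding cocompactly_expansive_def
    by (intro exI[of _ \<U>] exI[of _ K] conjI cov Kc orb exp)
qed

theorem mainTheorem5:
  fixes G :: "('g, 'b) monoid_scheme" and X :: "'a topology" and \<phi> :: "'g \<Rightarrow> 'a \<Rightarrow> 'a"
  assumes "metrizable_space X" and "locally_compact_space X" and "sigma_compact_space X"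
    and "group_act G X \<phi>"
  shows "(MIE G X \<phi> \<longleftrightarrow> expansively_extendible G X \<phi>) \<and>
         (expansively_extendible G X \<phi> \<longleftrightarrow> cocompactly_expansive G X \<phi>)"
proof -
  have haus: "Hausdorff_space X" using metrizable_imp_Hausdorff_space assms(1) by blast
  have 1: "MIE G X \<phi> \<Longrightarrow> cocompactly_expansive G X \<phi>"
    using MIE_imp_ce[OF assms(4) assms(1) assms(2) assms(3)] .
  have 2: "cocompactly_expansive G X \<phi> \<Longrightarrow> MIE G X \<phi>"
    using ce_imp_MIE[OF assms(4)] .
  have 3: "expansively_extendible G X \<phi> \<Longrightarrow> cocompactly_expansive G X \<phi>"
    using ee_imp_ce[OF assms(4)] .
  have 4: "cocompactly_expansive G X \<phi> \<Longrightarrow> expansively_extendible G X \<phi>"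
    using ce_imp_ee[OF assms(4) haus] .
  show ?thesis using 1 2 3 4 by blast
qed

end
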